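(* Assume the standing assumptions below and the reachability assumption: for all $s,s'\in\mathcal S$ there exists $a\in\mathcal A$ with $P(s'\mid s,a)>0$. Then for every $\theta\in\Theta$, a Markov chain with transition kernel $Q_\theta$ has a unique stationary distribution $\nu_\theta$, and there exist constants $\alpha\in(0,1)$ and $C>0$ such that for all $t\in\mathbb N_+$, $$\sup_{\theta\in\Theta}\max_{x\in\mathcal X}\|Q_\theta^t(x,\cdot)-\nu_\theta\|_{TV}\le C\alpha^t.$$
   Context: $\mathcal S,\mathcal A,\mathcal O$ are finite sets; $\Theta=\Theta_{hi}\times\Theta_{lo}\times\Theta_b$ is a convex compact subset of a Euclidean space. There are policies $\pi_{hi}(o\mid s;\theta_{hi})$ (distribution on $\mathcal O$), $\pi_{lo}(a\mid s,o;\theta_{lo})$ (distribution on $\mathcal A$), $\pi_b(b\mid s,o';\theta_b)$ (distribution on $\{0,1\}$), and an environment kernel $P(s'\mid s,a)$. For a fixed $\zeta\in(0,1)$, $\bar\pi_{hi}(o_t\mid s_t,o_{t-1},b_t;\theta_{hi})$ equals $\pi_{hi}(o_t\mid s_t;\theta_{hi})$ if $b_t=1$, $1-\zeta+\zeta/|\mathcal O|$ if $b_t=0,o_t=o_{t-1}$, and $\zeta/|\mathcal O|$ if $b_t=0,o_t\ne o_{t-1}$. Standing assumptions: there is an open $\tilde\Theta\supseteq\Theta$ on which $\pi_{hi},\pi_{lo},\pi_b$ are defined, strictly positive and continuously differentiable in $\theta$ (for all other arguments). With $\mathcal X=\mathcal S\times\mathcal A\times\mathcal O\times\{0,1\}$,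 $Q_\theta$ is the transition kernel on $\mathcal X$ of $X_t=(S_t,A_t,O_t,B_t)$ under the options-with-failure policy with parameter $\theta$: from $(s,a,o,b)$, draw $S_{t+1}\sim P(\cdot\mid s,a)$, $B_{t+1}\sim\pi_b(\cdot\mid S_{t+1},o;\theta_b)$, $O_{t+1}\sim\bar\pi_{hi}(\cdot\mid S_{t+1},o,B_{t+1};\theta_{hi})$, $A_{t+1}\sim\pi_{lo}(\cdot\mid S_{t+1},O_{t+1};\theta_{lo})$. $Q^t_\theta$ is the $t$-step kernel and $\|\nu_1-\nu_2\|_{TV}=\frac12\sum_x|\nu_1(x)-\nu_2(x)|$. *)

theory Defs
  imports "HOL-Analysis.Analysis"
begin

definition C1_on :: "'p::euclidean_space set \<Rightarrow> ('p \<Rightarrow> real) \<Rightarrow> bool" where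
  "C1_on U f \<longleftrightarrow> (\<exists>D :: 'p \<Rightarrow> ('p \<Rightarrow>\<^sub>L real).
      (\<forall>x\<in>U. (f has_derivative blinfun_apply (D x)) (at x)) \<and> continuous_on U D)"

definition is_dist :: "('x::finite \<Rightarrow> real) \<Rightarrow> bool" where
  "is_dist \<mu> \<longleftrightarrow> (\<forall>x. 0 \<le> \<mu> x) \<and> (\<Sum>x\<in>UNIV. \<mu> x) = 1"

definition pibar :: "real \<Rightarrow> ('h \<Rightarrow> 's \<Rightarrow> 'o::finite \<Rightarrow> real) \<Rightarrow> 'h \<Rightarrow> 's \<Rightarrow> 'o \<Rightarrow> bool \<Rightarrow> 'o \<Rightarrow> real" where
  "pibar \<zeta> pihi th s opv b ov =
     (if b then pihi th s ov
      else if ov = opv then 1 - \<zeta> + \<zeta> / real CARD('o)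
      else \<zeta> / real CARD('o))"

definition Qk :: "real \<Rightarrow> ('s \<Rightarrow> 'a \<Rightarrow> 's \<Rightarrow> real)
   \<Rightarrow> ('h \<Rightarrow> 's \<Rightarrow> 'o::finite \<Rightarrow> real)
   \<Rightarrow> ('l \<Rightarrow> 's \<Rightarrow> 'o \<Rightarrow> 'a \<Rightarrow> real)
   \<Rightarrow> ('b \<Rightarrow> 's \<Rightarrow> 'o \<Rightarrow> bool \<Rightarrow> real)
   \<Rightarrow> ('h \<times> 'l \<times> 'b) \<Rightarrow> ('s \<times> 'a \<times> 'o \<times> bool) \<Rightarrow> ('s \<times> 'a \<times> 'o \<times> bool) \<Rightarrow> real" where
  "Qk \<zeta> P pihi pilo pib \<theta> x y =
     (case \<theta> of (thh, thl, thb) \<Rightarrow>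
      case x of (s, a, ov, b) \<Rightarrow>
      case y of (s', a', ov', b') \<Rightarrow>
        P s a s' * pib thb s' ov b' * pibar \<zeta> pihi thh s' ov b' ov' * pilo thl s' ov' a')"

fun kpow :: "('x::finite \<Rightarrow> 'x \<Rightarrow> real) \<Rightarrow> nat \<Rightarrow> 'x \<Rightarrow> 'x \<Rightarrow> real" where
  "kpow Q 0 x y = (if x = y then 1 else 0)"
| "kpow Q (Suc n) x y = (\<Sum>z\<in>UNIV. kpow Q n x z * Q z y)"

definition stationary :: "('x::finite \<Rightarrow> 'x \<Rightarrow> real) \<Rightarrow> ('x \<Rightarrow> real) \<Rightarrow> bool" where
  "stationary Q \<nu> \<longleftrightarrow> is_dist \<nu> \<and> (\<forall>y. (\<Sum>x\<in>UNIV. \<nu> x * Q x y) = \<nu> y)"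

definition tv_dist :: "('x::finite \<Rightarrow> real) \<Rightarrow> ('x \<Rightarrow> real) \<Rightarrow> real" where
  "tv_dist \<mu>1 \<mu>2 = (1/2) * (\<Sum>x\<in>UNIV. \<bar>\<mu>1 x - \<mu>2 x\<bar>)"

end

theory Submission imports Defs begin

definition vm :: "('x::finite \<Rightarrow> real) \<Rightarrow> ('x \<Rightarrow> 'x \<Rightarrow> real) \<Rightarrow> 'x \<Rightarrow> real" where
  "vm \<mu> Q y = (\<Sum>x\<in>UNIV. \<mu> x * Q x y)"
definition l1 :: "('x::finite \<Rightarrow> real) \<Rightarrow> real" where
  "l1 \<mu> = (\<Sum>x\<in>UNIV. \<bar>\<mu> x\<bar>)"
definition stoch :: "('x::finite \<Rightarrow> 'x \<Rightarrow> real) \<Rightarrow> bool" where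
  "stoch Q \<longleftrightarrow> (\<forall>x y. 0 \<le> Q x y) \<and> (\<forall>x. (\<Sum>y\<in>UNIV. Q x y) = 1)"

lemma l1_vm_le:
  assumes "stoch Q" shows "l1 (vm \<mu> Q) \<le> l1 \<mu>"
proof -
  have "l1 (vm \<mu> Q) = (\<Sum>y\<in>UNIV. \<bar>\<Sum>x\<in>UNIV. \<mu> x * Q x y\<bar>)" by (simp add: l1_def vm_def)
  also have "\<dots> \<le> (\<Sum>y\<in>UNIV. \<Sum>x\<in>UNIV. \<bar>\<mu> x\<bar> * Q x y)"
    apply (rule sum_mono) apply (rule order_trans[OF sum_abs]) apply (rule sum_mono)
    using assms by (simp add: stoch_def abs_mult)
  also have "\<dots> = (\<Sum>x\<in>UNIV. \<bar>\<mu> x\<bar> * (\<Sum>y\<in>UNIV. Q x y))"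
    by (subst sum.swap) (simp add: sum_distrib_left)
  also have "\<dots> = l1 \<mu>" using assms by (simp add: stoch_def l1_def)
  finally show ?thesis .
qed

lemma l1_contract:
  fixes M :: "'x::finite \<Rightarrow> 'x \<Rightarrow> real"
  assumes M1: "\<forall>x. (\<Sum>y\<in>UNIV. M x y) = 1" and Md: "\<forall>x y. \<delta> \<le> M x y"
    and s0: "(\<Sum>x\<in>UNIV. \<mu> x) = 0"
  shows "l1 (vm \<mu> M) \<le> (1 - real CARD('x) * \<delta>) * l1 \<mu>"
proof -
  have eq: "vm \<mu> M y = (\<Sum>x\<in>UNIV. \<mu> x * (M x y - \<delta>))" for y
  proof -
    have "(\<Sum>x\<in>UNIV. \<mu> x * (M x y - \<delta>)) = (\<Sum>x\<in>UNIV. \<mu> x * M x y) - \<delta> * (\<Sum>x\<in>UNIV. \<mu> x)"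
      by (simp add: right_diff_distrib sum_subtractf sum_distrib_left mult.commute)
    then show ?thesis using s0 by (simp add: vm_def)
  qed
  have "l1 (vm \<mu> M) = (\<Sum>y\<in>UNIV. \<bar>\<Sum>x\<in>UNIV. \<mu> x * (M x y - \<delta>)\<bar>)" by (simp add: l1_def eq)
  also have "\<dots> \<le> (\<Sum>y\<in>UNIV. \<Sum>x\<in>UNIV. \<bar>\<mu> x\<bar> * (M x y - \<delta>))"
    apply (rule sum_mono) apply (rule order_trans[OF sum_abs]) apply (rule sum_mono)
    using Md by (simp add: abs_mult)
  also have "\<dots> = (\<Sum>x\<in>UNIV. \<bar>\<mu> x\<bar> * (\<Sum>y\<in>UNIV. (M x y - \<delta>)))"
    by (subst sum.swap) (simp add: sum_distrib_left)
  also have "\<dots> = (\<Sum>x\<in>UNIV. \<bar>\<mu> x\<bar> * (1 - real CARD('x) * \<delta>))"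
    using M1 by (simp add: sum_subtractf)
  also have "\<dots> = (1 - real CARD('x) * \<delta>) * l1 \<mu>"
    by (simp add: l1_def sum_distrib_right mult.commute)
  finally show ?thesis .
qed

lemma kpow_Suc_vm: "kpow Q (Suc n) x = vm (kpow Q n x) Q"
  by (simp add: vm_def fun_eq_iff)

lemma kpow_1: "kpow Q (Suc 0) x y = Q x y"
proof -
  have "(\<lambda>z. (if x = z then 1 else 0) * Q z y) = (\<lambda>z. if x = z then Q z y else 0)" by auto
  then show ?thesis by (simp only: kpow.simps) simp
qed

lemma kpow_2: "kpow Q 2 x y = (\<Sum>z\<in>UNIV. Q x z * Q z y)"
  proof -
  have "kpow Q 2 x y = (\<Sum>z\<in>UNIV. kpow Q (Suc 0) x z * Q z y)"
    by (simp only: numeral_2_eq_2 kpow.simps(2))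
  then show ?thesis by (simp only: kpow_1)
qed

lemma vm_vm: "vm (vm \<mu> Q) Q = vm \<mu> (kpow Q 2)"
proof
  fix y
  have "vm (vm \<mu> Q) Q y = (\<Sum>z\<in>UNIV. \<Sum>x\<in>UNIV. \<mu> x * Q x z * Q z y)"
    by (simp add: vm_def sum_distrib_right)
  also have "\<dots> = (\<Sum>x\<in>UNIV. \<Sum>z\<in>UNIV. \<mu> x * (Q x z * Q z y))"
    by (subst sum.swap) (simp add: mult.assoc)
  also have "\<dots> = vm \<mu> (kpow Q 2) y"
    by (simp add: vm_def kpow_2 sum_distrib_left)
  finally show "vm (vm \<mu> Q) Q y = vm \<mu> (kpow Q 2) y" .
qed

lemma vm_sum: assumes "stoch Q" shows "(\<Sum>y\<in>UNIV. vm \<mu> Q y) = (\<Sum>x\<in>UNIV. \<mu> x)"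
proof -
  have "(\<Sum>y\<in>UNIV. vm \<mu> Q y) = (\<Sum>x\<in>UNIV. \<mu> x * (\<Sum>y\<in>UNIV. Q x y))"
    by (simp add: vm_def sum_distrib_left) (rule sum.swap)
  then show ?thesis using assms by (simp add: stoch_def)
qed

lemma vm_diff: "vm (\<lambda>x. \<mu> x - \<nu> x) Q y = vm \<mu> Q y - vm \<nu> Q y"
  by (simp add: vm_def left_diff_distrib sum_subtractf)

lemma kpow_row_sum: assumes "stoch Q" shows "(\<Sum>y\<in>UNIV. kpow Q n x y) = 1"
proof (induct n)
  case 0 then show ?case by simp
next
  case (Suc n) then show ?case using vm_sum[OF assms] by (simp only: kpow_Suc_vm)
qed

lemma kpow_nonneg: assumes "stoch Q" shows "0 \<le> kpow Q n x y"
  using assms by (induct n arbitrary: y) (auto simp: stoch_def intro!: sum_nonneg)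


lemma exists_stationary:
  fixes Q :: "'x::finite \<Rightarrow> 'x \<Rightarrow> real"
  assumes st: "stoch Q"
  shows "\<exists>\<nu>. stationary Q \<nu>"
proof -
  define S where "S = {v::real^'x. (\<forall>i. 0 \<le> v$i) \<and> (\<Sum>i\<in>UNIV. v$i) = 1}"
  define f where "f = (\<lambda>v::real^'x. \<chi> y. \<Sum>x\<in>UNIV. v$x * Q x y)"
  have "bounded S"
    unfolding bounded_iff
  proof (intro exI ballI)
    fix v assume "v \<in> S"
    then have "(\<Sum>i\<in>UNIV. \<bar>v$i\<bar>) = 1" by (simp add: S_def)
    then show "norm v \<le> 1" using norm_le_l1_cart[of v] by simp
  qed
  moreover have "closed S"
    unfolding S_def
    by (intro closed_Collect_conj closed_Collect_all closed_Collect_le closed_Collect_eq continuous_intros)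
  ultimately have cS: "compact S" by (simp add: compact_eq_bounded_closed)
  have vS: "convex S"
    unfolding convex_def S_def
    by (auto simp: sum.distrib sum_distrib_left[symmetric])
  have nS: "S \<noteq> {}"
  proof -
    have "(\<chi> i. 1 / real CARD('x)) \<in> S" by (simp add: S_def)
    then show ?thesis by blast
  qed
  have cf: "continuous_on S f" unfolding f_def by (intro continuous_intros)
  have fS: "f \<in> S \<rightarrow> S"
  proof
    fix v assume v: "v \<in> S"
    have "(\<Sum>y\<in>UNIV. \<Sum>x\<in>UNIV. v$x * Q x y) = (\<Sum>x\<in>UNIV. v$x * (\<Sum>y\<in>UNIV. Q x y))"
      by (subst sum.swap) (simp add: sum_distrib_left)
    also have "\<dots> = 1" using v st by (simp add: S_def stoch_def)
    finally show "f v \<in> S" using v st unfolding S_def f_def stoch_def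
      by (auto intro!: sum_nonneg)
  qed
  obtain v where v: "v \<in> S" "f v = v" using brouwer[OF cS vS nS cf fS] by blast
  have "stationary Q (\<lambda>x. v$x)"
    unfolding stationary_def is_dist_def
  proof (intro conjI allI)
    fix y
    have "f v $ y = v $ y" using v by simp
    then show "(\<Sum>x\<in>UNIV. v$x * Q x y) = v$y" by (simp add: f_def)
  qed (use v in \<open>auto simp: S_def\<close>)
  then show ?thesis by blast
qed

lemma doeblin:
  fixes Q :: "'x::finite \<Rightarrow> 'x \<Rightarrow> real"
  assumes st: "stoch Q" and dl: "\<forall>x y. \<delta> \<le> kpow Q 2 x y" and dpos: "0 < \<delta>"
  shows "\<exists>\<nu>. stationary Q \<nu> \<and> (\<forall>\<mu>. stationary Q \<mu> \<longrightarrow> \<mu> = \<nu>) \<and>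
     (\<forall>t x. tv_dist (kpow Q t x) \<nu> \<le> (1 - real CARD('x) * \<delta>) ^ (t div 2))"
proof -
  define \<beta> where "\<beta> = 1 - real CARD('x) * \<delta>"
  have M1: "\<forall>x. (\<Sum>y\<in>UNIV. kpow Q 2 x y) = 1" using kpow_row_sum[OF st] by blast
  have "real CARD('x) * \<delta> = (\<Sum>y\<in>(UNIV::'x set). \<delta>)" by simp
  also have "\<dots> \<le> (\<Sum>y\<in>UNIV. kpow Q 2 undefined y)" using dl by (intro sum_mono) auto
  finally have b0: "0 \<le> \<beta>" using M1 by (simp add: \<beta>_def)
  have b1: "\<beta> < 1" using dpos by (simp add: \<beta>_def)
  have contr: "l1 (vm (vm \<mu> Q) Q) \<le> \<beta> * l1 \<mu>" if "(\<Sum>x\<in>UNIV. \<mu> x) = 0" for \<mu>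
    unfolding vm_vm \<beta>_def using l1_contract[OF M1 dl that] .
  obtain \<nu> where nu: "stationary Q \<nu>" using exists_stationary[OF st] by blast
  have vmnu: "vm \<nu> Q = \<nu>" using nu by (simp add: stationary_def vm_def fun_eq_iff)
  have uniq: "\<mu> = \<nu>" if mu: "stationary Q \<mu>" for \<mu>
  proof -
    define d where "d = (\<lambda>x. \<mu> x - \<nu> x)"
    have vmmu: "vm \<mu> Q = \<mu>" using mu by (simp add: stationary_def vm_def fun_eq_iff)
    have vd: "vm d Q = d" unfolding d_def by (simp add: fun_eq_iff vm_diff vmmu vmnu)
    have "(\<Sum>x\<in>UNIV. d x) = 0" using mu nu by (simp add: d_def sum_subtractf stationary_def is_dist_def)
    from contr[OF this] vd have "l1 d \<le> \<beta> * l1 d" by simp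
    moreover have "0 \<le> l1 d" by (simp add: l1_def)
    ultimately have "l1 d = 0"
    proof -
      assume a: "l1 d \<le> \<beta> * l1 d" "0 \<le> l1 d"
      show ?thesis
      proof (rule ccontr)
        assume "l1 d \<noteq> 0"
        with a have "0 < l1 d" by simp
        then have "\<beta> * l1 d < 1 * l1 d" using b1 by (intro mult_strict_right_mono) auto
        with a show False by simp
      qed
    qed
    then have "\<forall>x. \<bar>d x\<bar> = 0" unfolding l1_def by (subst (asm) sum_nonneg_eq_0_iff) auto
    then show ?thesis by (simp add: d_def fun_eq_iff)
  qed
  have rate: "tv_dist (kpow Q t x) \<nu> \<le> \<beta> ^ (t div 2)" for t x
  proof -
    define d where "d = (\<lambda>n y. kpow Q n x y - \<nu> y)"
    have dS: "d (Suc n) = vm (d n) Q" for n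
      unfolding d_def by (simp add: fun_eq_iff vm_diff vmnu kpow_Suc_vm[symmetric])
    have ds0: "(\<Sum>y\<in>UNIV. d n y) = 0" for n
      using nu kpow_row_sum[OF st] by (simp add: d_def sum_subtractf stationary_def is_dist_def)
    have d0: "l1 (d 0) \<le> 2"
    proof -
      have "l1 (d 0) \<le> (\<Sum>y\<in>UNIV. \<bar>kpow Q 0 x y\<bar> + \<bar>\<nu> y\<bar>)"
        unfolding l1_def d_def by (intro sum_mono) linarith
      also have "\<dots> = 2" using nu by (simp add: sum.distrib stationary_def is_dist_def)
      finally show ?thesis .
    qed
    have "l1 (d n) \<le> 2 * \<beta> ^ (n div 2) \<and> l1 (d (Suc n)) \<le> 2 * \<beta> ^ (Suc n div 2)" for n
    proof (induct n)
      case 0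
      have "l1 (d 1) \<le> l1 (d 0)" using dS[of 0] l1_vm_le[OF st] by simp
      then show ?case using d0 by simp
    next
      case (Suc n)
      have "l1 (d (Suc (Suc n))) \<le> \<beta> * l1 (d n)" using contr[OF ds0[of n]] by (simp add: dS)
      also have "\<dots> \<le> \<beta> * (2 * \<beta> ^ (n div 2))" using Suc b0 by (intro mult_left_mono) auto
      also have "\<dots> = 2 * \<beta> ^ (Suc (Suc n) div 2)" by simp
      finally show ?case using Suc by simp
    qed
    then have "l1 (d t) \<le> 2 * \<beta> ^ (t div 2)" by blast
    then show ?thesis by (simp add: tv_dist_def l1_def d_def)
  qed
  show ?thesis using nu uniq rate unfolding \<beta>_def by blast
qed


lemma sum_UNIV_prod: "(\<Sum>p\<in>UNIV. f p) = (\<Sum>a\<in>UNIV. \<Sum>b\<in>UNIV. f (a,b))"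
  by (simp add: sum.cartesian_product)

lemma swap3: "(\<Sum>a\<in>A. \<Sum>b\<in>B. \<Sum>c\<in>C. F a b c) = (\<Sum>c\<in>C. \<Sum>b\<in>B. \<Sum>a\<in>A. F a b c)"
proof -
  have "(\<Sum>a\<in>A. \<Sum>b\<in>B. \<Sum>c\<in>C. F a b c) = (\<Sum>b\<in>B. \<Sum>a\<in>A. \<Sum>c\<in>C. F a b c)" by (rule sum.swap)
  also have "\<dots> = (\<Sum>b\<in>B. \<Sum>c\<in>C. \<Sum>a\<in>A. F a b c)" by (intro sum.cong refl sum.swap)
  also have "\<dots> = (\<Sum>c\<in>C. \<Sum>b\<in>B. \<Sum>a\<in>A. F a b c)" by (rule sum.swap)
  finally show ?thesis .
qed

lemma pibar_nonneg:
  assumes "0 < \<zeta>" "\<zeta> < 1" "\<forall>ov. 0 \<le> pihi th s ov"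
  shows "0 \<le> pibar \<zeta> pihi th s opv b ov"
  using assms by (simp add: pibar_def)

lemma pibar_pos:
  assumes "0 < \<zeta>" "\<zeta> < 1" "\<forall>ov. 0 < pihi th s ov"
  shows "0 < pibar \<zeta> pihi th s opv b (ov::'o::finite)"
  using assms by (simp add: pibar_def add_pos_nonneg)

lemma pibar_sum:
  fixes pihi :: "'h \<Rightarrow> 's \<Rightarrow> 'o::finite \<Rightarrow> real"
  assumes "is_dist (pihi th s)"
  shows "(\<Sum>ov\<in>UNIV. pibar \<zeta> pihi th s opv b ov) = 1"
proof (cases b)
  case True then show ?thesis using assms by (simp add: pibar_def is_dist_def)
next
  case False
  have "(\<Sum>ov\<in>UNIV. pibar \<zeta> pihi th s opv b ov) =
     (\<Sum>ov\<in>(UNIV::'o set). \<zeta> / real CARD('o) + (if ov = opv then 1 - \<zeta> else 0))"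
    using False by (intro sum.cong) (auto simp: pibar_def)
  also have "\<dots> = 1" by (simp add: sum.distrib)
  finally show ?thesis .
qed

lemma Qk_alt: "Qk \<zeta> P pihi pilo pib \<theta> (s,a,ov,b) (s',a',ov',b') =
  P s a s' * pib (snd (snd \<theta>)) s' ov b' * pibar \<zeta> pihi (fst \<theta>) s' ov b' ov' * pilo (fst (snd \<theta>)) s' ov' a'"
  by (cases \<theta>) (simp add: Qk_def)

lemma Qk_stoch:
  fixes P :: "'s::finite \<Rightarrow> 'a::finite \<Rightarrow> 's \<Rightarrow> real"
    and pihi :: "'h \<Rightarrow> 's \<Rightarrow> 'o::finite \<Rightarrow> real"
    and pilo :: "'l \<Rightarrow> 's \<Rightarrow> 'o \<Rightarrow> 'a \<Rightarrow> real"
    and pib :: "'b \<Rightarrow> 's \<Rightarrow> 'o \<Rightarrow> bool \<Rightarrow> real"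
  assumes z: "0 < \<zeta>" "\<zeta> < 1" and Pd: "\<And>s a. is_dist (P s a)"
   and hd: "\<And>s. is_dist (pihi thh s)" and ld: "\<And>s ov. is_dist (pilo thl s ov)"
   and bd: "\<And>s ov. is_dist (pib thb s ov)"
  shows "stoch (Qk \<zeta> P pihi pilo pib (thh, thl, thb))"
  unfolding stoch_def
proof (intro conjI allI)
  fix x y :: "'s \<times> 'a \<times> 'o \<times> bool"
  obtain s a ov b where x: "x = (s,a,ov,b)" by (cases x) auto
  obtain s' a' ov' b' where y: "y = (s',a',ov',b')" by (cases y) auto
  have "0 \<le> pibar \<zeta> pihi thh s' ov b' ov'"
    using hd z by (intro pibar_nonneg) (auto simp: is_dist_def)
  then show "0 \<le> Qk \<zeta> P pihi pilo pib (thh, thl, thb) x y"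
    using Pd ld bd unfolding x y Qk_alt by (auto simp: is_dist_def intro!: mult_nonneg_nonneg)
next
  fix x :: "'s \<times> 'a \<times> 'o \<times> bool"
  obtain s a ov b where x: "x = (s,a,ov,b)" by (cases x) auto
  have inner: "(\<Sum>a'\<in>UNIV. \<Sum>ov'\<in>UNIV. \<Sum>b'\<in>UNIV. P s a s' * pib thb s' ov b' * pibar \<zeta> pihi thh s' ov b' ov' * pilo thl s' ov' a') = P s a s'" for s'
  proof -
    have "(\<Sum>a'\<in>UNIV. \<Sum>ov'\<in>UNIV. \<Sum>b'\<in>UNIV. P s a s' * pib thb s' ov b' * pibar \<zeta> pihi thh s' ov b' ov' * pilo thl s' ov' a')
      = (\<Sum>b'\<in>UNIV. \<Sum>ov'\<in>UNIV. \<Sum>a'\<in>UNIV. P s a s' * pib thb s' ov b' * pibar \<zeta> pihi thh s' ov b' ov' * pilo thl s' ov' a')"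
      by (rule swap3)
    also have "\<dots> = (\<Sum>b'\<in>UNIV. \<Sum>ov'\<in>UNIV. P s a s' * pib thb s' ov b' * pibar \<zeta> pihi thh s' ov b' ov' * (\<Sum>a'\<in>UNIV. pilo thl s' ov' a'))"
      by (simp add: sum_distrib_left)
    also have "\<dots> = (\<Sum>b'\<in>UNIV. P s a s' * pib thb s' ov b' * (\<Sum>ov'\<in>UNIV. pibar \<zeta> pihi thh s' ov b' ov'))"
      using ld by (simp add: is_dist_def sum_distrib_left)
    also have "\<dots> = P s a s' * (\<Sum>b'\<in>UNIV. pib thb s' ov b')"
      using hd by (simp add: pibar_sum sum_distrib_left)
    also have "\<dots> = P s a s'" using bd by (simp add: is_dist_def)
    finally show ?thesis .
  qed
  have "(\<Sum>y\<in>UNIV. Qk \<zeta> P pihi pilo pib (thh, thl, thb) x y) = (\<Sum>s'\<in>UNIV. P s a s')"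
    unfolding x sum_UNIV_prod Qk_alt using inner by simp
  then show "(\<Sum>y\<in>UNIV. Qk \<zeta> P pihi pilo pib (thh, thl, thb) x y) = 1"
    using Pd by (simp add: is_dist_def)
qed

lemma kpow2_pos:
  fixes P :: "'s::finite \<Rightarrow> 'a::finite \<Rightarrow> 's \<Rightarrow> real"
    and pihi :: "'h \<Rightarrow> 's \<Rightarrow> 'o::finite \<Rightarrow> real"
    and pilo :: "'l \<Rightarrow> 's \<Rightarrow> 'o \<Rightarrow> 'a \<Rightarrow> real"
    and pib :: "'b \<Rightarrow> 's \<Rightarrow> 'o \<Rightarrow> bool \<Rightarrow> real"
  assumes z: "0 < \<zeta>" "\<zeta> < 1" and Pd: "\<And>s a. is_dist (P s a)"
   and hd: "\<And>s. is_dist (pihi thh s)" and ld: "\<And>s ov. is_dist (pilo thl s ov)"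
   and bd: "\<And>s ov. is_dist (pib thb s ov)"
   and hp: "\<And>s ov. 0 < pihi thh s ov" and lp: "\<And>s ov a. 0 < pilo thl s ov a"
   and bp: "\<And>s ov b. 0 < pib thb s ov b"
   and reach: "\<And>s s'. \<exists>a. P s a s' > 0"
  shows "0 < kpow (Qk \<zeta> P pihi pilo pib (thh, thl, thb)) 2 x y"
proof -
  let ?Q = "Qk \<zeta> P pihi pilo pib (thh, thl, thb)"
  have st: "stoch ?Q" using z Pd hd ld bd by (rule Qk_stoch)
  obtain s a ov b where x: "x = (s,a,ov,b)" by (cases x) auto
  obtain s' a' ov' b' where y: "y = (s',a',ov',b')" by (cases y) auto
  obtain s1 where s1: "0 < P s a s1"
  proof (rule ccontr)
    assume "\<not> thesis"
    then have "\<forall>s1. P s a s1 \<le> 0" using that not_le by blast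
    then have "(\<Sum>s1\<in>UNIV. P s a s1) \<le> 0" by (simp add: sum_nonpos)
    then show False using Pd[of s a] by (simp add: is_dist_def)
  qed
  obtain a1 where a1: "0 < P s1 a1 s'" using reach by blast
  have pb: "0 < pibar \<zeta> pihi thh s'' opv bb ov''" for s'' opv bb ov''
    using z hp by (intro pibar_pos) auto
  define z0 where "z0 = (s1, a1, ov, True)"
  have "0 < ?Q x z0 * ?Q z0 y"
    unfolding x y z0_def Qk_alt using s1 a1 pb hp lp bp by simp
  also have "\<dots> \<le> (\<Sum>z\<in>UNIV. ?Q x z * ?Q z y)"
    using st unfolding stoch_def by (intro member_le_sum) (auto intro!: mult_nonneg_nonneg simp del: split_paired_All)
  finally show ?thesis by (simp add: kpow_2)
qed

lemma pos_lb:
  fixes f :: "'t::topological_space \<Rightarrow> real"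
  assumes "compact K" "continuous_on K f" "\<forall>t\<in>K. 0 < f t"
  shows "\<exists>c>0. \<forall>t\<in>K. c \<le> f t"
proof (cases "K = {}")
  case True then show ?thesis by (intro exI[of _ 1]) auto
next
  case False
  from continuous_attains_inf[OF assms(1) False assms(2)] obtain t0 where
    "t0 \<in> K" "\<forall>t\<in>K. f t0 \<le> f t" by blast
  then show ?thesis using assms(3) by blast
qed

lemma C1_cont: assumes "C1_on U f" "open U" shows "continuous_on U f"
proof -
  from assms(1) obtain D where D: "\<forall>x\<in>U. (f has_derivative blinfun_apply (D x)) (at x)"
    unfolding C1_on_def by blast
  show ?thesis
    by (rule continuous_at_imp_continuous_on) (use D has_derivative_continuous in blast)
qed


theorem proposition1:
  fixes P :: "'s::finite \<Rightarrow> 'a::finite \<Rightarrow> 's \<Rightarrow> real"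
    and pihi :: "'h::euclidean_space \<Rightarrow> 's \<Rightarrow> 'o::finite \<Rightarrow> real"
    and pilo :: "'l::euclidean_space \<Rightarrow> 's \<Rightarrow> 'o \<Rightarrow> 'a \<Rightarrow> real"
    and pib :: "'b::euclidean_space \<Rightarrow> 's \<Rightarrow> 'o \<Rightarrow> bool \<Rightarrow> real"
    and Th :: "'h set" and Tl :: "'l set" and Tb :: "'b set"
    and Uh :: "'h set" and Ul :: "'l set" and Ub :: "'b set"
    and \<zeta> :: real
  assumes zeta: "0 < \<zeta>" "\<zeta> < 1"
    and Theta_convex: "convex (Th \<times> Tl \<times> Tb)"
    and Theta_compact: "compact (Th \<times> Tl \<times> Tb)"
    and U_open: "open Uh" "open Ul" "open Ub"
    and U_sub: "Th \<subseteq> Uh" "Tl \<subseteq> Ul" "Tb \<subseteq> Ub"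
    and P_dist: "\<And>s a. is_dist (P s a)"
    and pihi_dist: "\<And>th s. th \<in> Uh \<Longrightarrow> is_dist (pihi th s)"
    and pilo_dist: "\<And>th s ov. th \<in> Ul \<Longrightarrow> is_dist (pilo th s ov)"
    and pib_dist: "\<And>th s ov. th \<in> Ub \<Longrightarrow> is_dist (pib th s ov)"
    and pihi_pos: "\<And>th s ov. th \<in> Uh \<Longrightarrow> 0 < pihi th s ov"
    and pilo_pos: "\<And>th s ov a. th \<in> Ul \<Longrightarrow> 0 < pilo th s ov a"
    and pib_pos: "\<And>th s ov b. th \<in> Ub \<Longrightarrow> 0 < pib th s ov b"
    and pihi_C1: "\<And>s ov. C1_on Uh (\<lambda>th. pihi th s ov)"
    and pilo_C1: "\<And>s ov a. C1_on Ul (\<lambda>th. pilo th s ov a)"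
    and pib_C1: "\<And>s ov b. C1_on Ub (\<lambda>th. pib th s ov b)"
    and reach: "\<And>s s'. \<exists>a. P s a s' > 0"
  shows "\<exists>\<nu> :: ('h \<times> 'l \<times> 'b) \<Rightarrow> ('s \<times> 'a \<times> 'o \<times> bool) \<Rightarrow> real.
           (\<forall>\<theta>\<in>Th \<times> Tl \<times> Tb.
              stationary (Qk \<zeta> P pihi pilo pib \<theta>) (\<nu> \<theta>) \<and>
              (\<forall>\<mu>. stationary (Qk \<zeta> P pihi pilo pib \<theta>) \<mu> \<longrightarrow> \<mu> = \<nu> \<theta>)) \<and>
           (\<exists>\<alpha> C. 0 < \<alpha> \<and> \<alpha> < 1 \<and> 0 < C \<and>
              (\<forall>t::nat. t \<ge> 1 \<longrightarrow>
                 (\<forall>\<theta>\<in>Th \<times> Tl \<times> Tb. \<forall>x.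
                    tv_dist (kpow (Qk \<zeta> P pihi pilo pib \<theta>) t x) (\<nu> \<theta>) \<le> C * \<alpha> ^ t)))"
proof -
  define T where "T = Th \<times> Tl \<times> Tb"
  let ?Q = "\<lambda>\<theta>. Qk \<zeta> P pihi pilo pib \<theta>"
  have memT: "fst \<theta> \<in> Uh" "fst (snd \<theta>) \<in> Ul" "snd (snd \<theta>) \<in> Ub" if "\<theta> \<in> T" for \<theta>
    using that U_sub by (auto simp: T_def)
  have stT: "stoch (?Q \<theta>)" if "\<theta> \<in> T" for \<theta>
  proof -
    obtain thh thl thb where th: "\<theta> = (thh, thl, thb)" by (cases \<theta>) auto
    show ?thesis unfolding th using memT[OF that] unfolding th
      by (intro Qk_stoch zeta P_dist pihi_dist pilo_dist pib_dist) auto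
  qed
  have posT: "0 < kpow (?Q \<theta>) 2 x y" if "\<theta> \<in> T" for \<theta> x y
  proof -
    obtain thh thl thb where th: "\<theta> = (thh, thl, thb)" by (cases \<theta>) auto
    show ?thesis unfolding th using memT[OF that] unfolding th
      by (intro kpow2_pos zeta P_dist pihi_dist pilo_dist pib_dist pihi_pos pilo_pos pib_pos reach) auto
  qed
  have ch: "continuous_on T (\<lambda>\<theta>. pihi (fst \<theta>) s ov)" for s ov
    by (rule continuous_on_compose2[OF C1_cont[OF pihi_C1 U_open(1)] continuous_on_fst[OF continuous_on_id]])
      (use memT in auto)
  have cl: "continuous_on T (\<lambda>\<theta>. pilo (fst (snd \<theta>)) s ov a)" for s ov a
    by (rule continuous_on_compose2[OF C1_cont[OF pilo_C1 U_open(2)]])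
      (auto intro!: continuous_intros dest: memT)
  have cb: "continuous_on T (\<lambda>\<theta>. pib (snd (snd \<theta>)) s ov b)" for s ov b
    by (rule continuous_on_compose2[OF C1_cont[OF pib_C1 U_open(3)]])
      (auto intro!: continuous_intros dest: memT)
  have cpb: "continuous_on T (\<lambda>\<theta>. pibar \<zeta> pihi (fst \<theta>) s opv b ov)" for s opv b ov
    by (cases b) (simp_all add: pibar_def ch)
  have cQ: "continuous_on T (\<lambda>\<theta>. ?Q \<theta> x y)" for x y
  proof -
    obtain s a ov b where x: "x = (s,a,ov,b)" by (cases x) auto
    obtain s' a' ov' b' where y: "y = (s',a',ov',b')" by (cases y) auto
    show ?thesis unfolding x y Qk_alt
      by (intro continuous_on_mult continuous_on_const cb cl cpb)
  qed
  have ck: "continuous_on T (\<lambda>\<theta>. kpow (?Q \<theta>) 2 x y)" for x y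
    unfolding kpow_2 by (intro continuous_on_sum continuous_on_mult cQ)
  have cT: "compact T" using Theta_compact by (simp add: T_def)
  have "\<forall>p. \<exists>c>0. \<forall>\<theta>\<in>T. c \<le> kpow (?Q \<theta>) 2 (fst p) (snd p)"
    using pos_lb[OF cT ck] posT by blast
  then obtain c where c: "\<And>p. 0 < c p" "\<And>p \<theta>. \<theta> \<in> T \<Longrightarrow> c p \<le> kpow (?Q \<theta>) 2 (fst p) (snd p)"
    by metis
  define \<delta> where "\<delta> = min (Min (range c)) (1 / real CARD('s \<times> 'a \<times> 'o \<times> bool))"
  have "0 < Min (range c)" using c(1) by (subst Min_gr_iff) auto
  then have dpos: "0 < \<delta>" unfolding \<delta>_def by simp
  have dle: "\<forall>x y. \<delta> \<le> kpow (?Q \<theta>) 2 x y" if "\<theta> \<in> T" for \<theta>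
  proof (intro allI)
    fix x y
    have "\<delta> \<le> c (x,y)" unfolding \<delta>_def by (rule min.coboundedI1, rule Min_le) auto
    also have "\<dots> \<le> kpow (?Q \<theta>) 2 x y" using c(2)[OF that, of "(x,y)"] by simp
    finally show "\<delta> \<le> kpow (?Q \<theta>) 2 x y" .
  qed
  define \<beta> where "\<beta> = 1 - real CARD('s \<times> 'a \<times> 'o \<times> bool) * \<delta>"
  have "\<forall>\<theta>\<in>T. \<exists>\<nu>. stationary (?Q \<theta>) \<nu> \<and> (\<forall>\<mu>. stationary (?Q \<theta>) \<mu> \<longrightarrow> \<mu> = \<nu>) \<and>
     (\<forall>t x. tv_dist (kpow (?Q \<theta>) t x) \<nu> \<le> \<beta> ^ (t div 2))"
    unfolding \<beta>_def using doeblin[OF stT dle dpos] by blast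
  then obtain \<nu> where nu: "\<And>\<theta>. \<theta> \<in> T \<Longrightarrow> stationary (?Q \<theta>) (\<nu> \<theta>) \<and>
     (\<forall>\<mu>. stationary (?Q \<theta>) \<mu> \<longrightarrow> \<mu> = \<nu> \<theta>) \<and>
     (\<forall>t x. tv_dist (kpow (?Q \<theta>) t x) (\<nu> \<theta>) \<le> \<beta> ^ (t div 2))"
    by metis
  have b0: "0 \<le> \<beta>" and b1: "\<beta> < 1"
  proof -
    have "\<beta> < 1" using dpos by (simp add: \<beta>_def)
    then show "\<beta> < 1" .
    have "real CARD('s \<times> 'a \<times> 'o \<times> bool) * \<delta> \<le> real CARD('s \<times> 'a \<times> 'o \<times> bool) * (1 / real CARD('s \<times> 'a \<times> 'o \<times> bool))"
      unfolding \<delta>_def by (intro mult_left_mono) auto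
    then show "0 \<le> \<beta>" by (simp add: \<beta>_def)
  qed
  define \<gamma> where "\<gamma> = max \<beta> (1/2)"
  define \<alpha> where "\<alpha> = sqrt \<gamma>"
  have g: "0 < \<gamma>" "\<gamma> < 1" using b1 by (auto simp: \<gamma>_def)
  have a: "0 < \<alpha>" "\<alpha> < 1" using g by (auto simp: \<alpha>_def)
  have main: "\<beta> ^ (t div 2) \<le> (1/\<alpha>) * \<alpha> ^ t" if t1: "t \<ge> 1" for t
  proof -
    have "\<beta> ^ (t div 2) \<le> \<gamma> ^ (t div 2)" using b0 by (intro power_mono) (auto simp: \<gamma>_def)
    also have "\<dots> = \<alpha> ^ (2 * (t div 2))" using g by (simp add: \<alpha>_def power_mult)
    also have "\<dots> \<le> \<alpha> ^ (t - 1)" using a by (intro power_decreasing) auto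
    also have "\<dots> = (1/\<alpha>) * \<alpha> ^ t"
    proof -
      obtain k where k: "t = Suc k" using t1 by (cases t) auto
      show ?thesis using a unfolding k by simp
    qed
    finally show ?thesis .
  qed
  have A: "\<forall>\<theta>\<in>Th \<times> Tl \<times> Tb. stationary (?Q \<theta>) (\<nu> \<theta>) \<and> (\<forall>\<mu>. stationary (?Q \<theta>) \<mu> \<longrightarrow> \<mu> = \<nu> \<theta>)"
      using nu unfolding T_def by blast
  have B: "\<forall>t. 1 \<le> t \<longrightarrow> (\<forall>\<theta>\<in>Th \<times> Tl \<times> Tb. \<forall>x. tv_dist (kpow (?Q \<theta>) t x) (\<nu> \<theta>) \<le> 1 / \<alpha> * \<alpha> ^ t)"
      using nu main unfolding T_def by (meson order_trans)
  have "0 < 1/\<alpha>" using a by auto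
  then show ?thesis using A B a by blast
qed

end
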